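(* For every positive integer $n$, the sets $\mathcal{L}_n$ and $\mathcal{M}_n$ have least elements, and $\min \mathcal{L}_n = \min \mathcal{M}_n$.
   Context: For an irrational real $\xi$ and positive integer $n$, $\lambda_n(\xi) = \limsup_{s/t \to \xi} \dfrac{\gcd(t,n)}{t^2 \left| \frac{s}{t} - \xi\right|}$ (limsup over rationals $s/t$, $t>0$, tending to $\xi$), and $\mathcal{L}_n = \{\lambda_n(\xi)\in\mathbb{R} : \xi\in\mathbb{R}\setminus\mathbb{Q}\}$. For reals $\xi\ne\xi'$, $\mu_n(\xi,\xi') = \sup_{(s,t)\in\mathbb{Z}^2\setminus\{0\}} \dfrac{\gcd(t,n)\,|\xi-\xi'|}{|s-t\xi|\,|s-t\xi'|}$ (with $\gcd(0,n)=n$), and $\mathcal{M}_n$ is the set of finite values of $\mu_n(\xi,\xi')$ over pairs of reals $\xi\neq\xi'$. *)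

theory Defs
  imports "HOL-Analysis.Analysis"
begin

text \<open>Quantity whose limsup defines lambda_n: gcd(t,n) / (t^2 |s/t - xi|), valued in ereal
  (infinite if s/t = xi, which never happens for irrational xi).\<close>
definition lam_term :: "nat \<Rightarrow> real \<Rightarrow> int \<Rightarrow> int \<Rightarrow> ereal" where
  "lam_term n \<xi> s t =
     (if of_int s / of_int t = \<xi> then \<infinity>
      else ereal (of_int (gcd t (int n)) / ((of_int t)\<^sup>2 * \<bar>of_int s / of_int t - \<xi>\<bar>)))"

text \<open>lambda_n(xi) = limsup over rationals s/t (t > 0) tending to xi, written as
  inf over eps > 0 of the sup over all s/t with t > 0 and |s/t - xi| < eps.\<close>
definition lambda_n :: "nat \<Rightarrow> real \<Rightarrow> ereal" where
  "lambda_n n \<xi> =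
     (INF \<epsilon>\<in>{0<..}. SUP p\<in>{(s, t). t > 0 \<and> \<bar>of_int s / of_int t - \<xi>\<bar> < \<epsilon>}.
        lam_term n \<xi> (fst p) (snd p))"

definition L_set :: "nat \<Rightarrow> real set" where
  "L_set n = {x. \<exists>\<xi>. \<xi> \<notin> \<rat> \<and> lambda_n n \<xi> = ereal x}"

text \<open>Term of mu_n: gcd(t,n) |xi - xi'| / (|s - t xi| |s - t xi'|), infinite when the
  denominator vanishes.  Note gcd 0 n = n in Isabelle.\<close>
definition mu_term :: "nat \<Rightarrow> real \<Rightarrow> real \<Rightarrow> int \<Rightarrow> int \<Rightarrow> ereal" where
  "mu_term n \<xi> \<xi>' s t =
     (let d = \<bar>of_int s - of_int t * \<xi>\<bar> * \<bar>of_int s - of_int t * \<xi>'\<bar> in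
      if d = 0 then \<infinity>
      else ereal (of_int (gcd t (int n)) * \<bar>\<xi> - \<xi>'\<bar> / d))"

definition mu_n :: "nat \<Rightarrow> real \<Rightarrow> real \<Rightarrow> ereal" where
  "mu_n n \<xi> \<xi>' = (SUP p\<in>(UNIV - {(0, 0)}). mu_term n \<xi> \<xi>' (fst p) (snd p))"

definition M_set :: "nat \<Rightarrow> real set" where
  "M_set n = {x. \<exists>\<xi> \<xi>'. \<xi> \<noteq> \<xi>' \<and> mu_n n \<xi> \<xi>' = ereal x}"

end

theory Submission
  imports Defs
begin

definition pterm :: "nat \<Rightarrow> real \<Rightarrow> real \<Rightarrow> real \<Rightarrow> real \<Rightarrow> int \<Rightarrow> int \<Rightarrow> int \<Rightarrow> int \<Rightarrow> ereal" where
  "pterm n a b c d p q s t =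
     (let x = a * of_int s + b * of_int t; y = c * of_int s + d * of_int t in
      if x * y = 0 then \<infinity>
      else ereal (of_int (gcd (p * s + q * t) (int n)) * \<bar>a * d - b * c\<bar> / \<bar>x * y\<bar>))"

lemma pterm_transform:
  assumes "h11 * h22 - h12 * h21 = (1::int)"
  shows "pterm n (a * of_int h11 + b * of_int h21) (a * of_int h12 + b * of_int h22)
                 (c * of_int h11 + d * of_int h21) (c * of_int h12 + d * of_int h22)
                 (p * h11 + q * h21) (p * h12 + q * h22) s t
       = pterm n a b c d p q (h11 * s + h12 * t) (h21 * s + h22 * t)"
proof -
  have e1: "(a * of_int h11 + b * of_int h21) * of_int s + (a * of_int h12 + b * of_int h22) * of_int t
      = a * of_int (h11 * s + h12 * t) + b * of_int (h21 * s + h22 * t)"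
    by (simp add: algebra_simps)
  have e2: "(c * of_int h11 + d * of_int h21) * of_int s + (c * of_int h12 + d * of_int h22) * of_int t
      = c * of_int (h11 * s + h12 * t) + d * of_int (h21 * s + h22 * t)"
    by (simp add: algebra_simps)
  have e3: "(p * h11 + q * h21) * s + (p * h12 + q * h22) * t = p * (h11 * s + h12 * t) + q * (h21 * s + h22 * t)"
    by (simp add: algebra_simps)
  have "(a * of_int h11 + b * of_int h21) * (c * of_int h12 + d * of_int h22) -
        (a * of_int h12 + b * of_int h22) * (c * of_int h11 + d * of_int h21)
        = (a * d - b * c) * of_int (h11 * h22 - h12 * h21)"
    by (simp add: algebra_simps)
  then have e4: "(a * of_int h11 + b * of_int h21) * (c * of_int h12 + d * of_int h22) -
        (a * of_int h12 + b * of_int h22) * (c * of_int h11 + d * of_int h21) = a * d - b * c"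
    using assms by simp
  show ?thesis unfolding pterm_def Let_def e1 e2 e3 e4 ..
qed

lemma transform_nonzero:
  assumes "h11 * h22 - h12 * h21 = (1::int)" "(s, t) \<noteq> (0, 0)"
  shows "(h11 * s + h12 * t, h21 * s + h22 * t) \<noteq> (0, 0)"
proof
  assume "(h11 * s + h12 * t, h21 * s + h22 * t) = (0, 0)"
  then have z1: "h11 * s + h12 * t = 0" and z2: "h21 * s + h22 * t = 0" by auto
  have "h22 * (h11 * s + h12 * t) - h12 * (h21 * s + h22 * t) = (h11 * h22 - h12 * h21) * s"
    by (simp add: algebra_simps)
  then have "s = h22 * (h11 * s + h12 * t) - h12 * (h21 * s + h22 * t)"
    using assms(1) by simp
  moreover have "h11 * (h21 * s + h22 * t) - h21 * (h11 * s + h12 * t) = (h11 * h22 - h12 * h21) * t"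
    by (simp add: algebra_simps)
  then have "t = h11 * (h21 * s + h22 * t) - h21 * (h11 * s + h12 * t)"
    using assms(1) by simp
  ultimately show False using z1 z2 assms(2) by simp
qed

lemma pterm_nonneg: "pterm n a b c d p q s t \<ge> 0"
  unfolding pterm_def Let_def by auto

lemma mu_term_pterm:
  assumes "a \<noteq> 0" "c \<noteq> 0"
  shows "mu_term n (- b / a) (- d / c) s t = pterm n a b c d 0 1 s t"
proof -
  have x: "of_int s - of_int t * (- b / a) = (a * of_int s + b * of_int t) / a"
    using assms by (simp add: field_simps)
  have y: "of_int s - of_int t * (- d / c) = (c * of_int s + d * of_int t) / c"
    using assms by (simp add: field_simps)
  have D: "- b / a - - d / c = (a * d - b * c) / (a * c)"
    using assms by (simp add: field_simps)
  define X where "X = a * of_int s + b * of_int t"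
  define Y where "Y = c * of_int s + d * of_int t"
  define g where "g = (of_int (gcd (0 * s + 1 * t) (int n)) :: real)"
  have gg: "of_int (gcd t (int n)) = g" unfolding g_def by simp
  have z: "(\<bar>X / a\<bar> * \<bar>Y / c\<bar> = 0) = (X * Y = 0)"
    using assms by simp
  have r: "g * \<bar>(a * d - b * c) / (a * c)\<bar> / (\<bar>X / a\<bar> * \<bar>Y / c\<bar>)
        = g * \<bar>a * d - b * c\<bar> / \<bar>X * Y\<bar>" if "X * Y \<noteq> 0"
  proof -
    have "\<bar>X / a\<bar> * \<bar>Y / c\<bar> = \<bar>X * Y\<bar> / \<bar>a * c\<bar>" by (simp add: abs_mult)
    moreover have "\<bar>(a * d - b * c) / (a * c)\<bar> = \<bar>a * d - b * c\<bar> / \<bar>a * c\<bar>" by (simp add: abs_mult)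
    ultimately show ?thesis using assms that by simp
  qed
  show ?thesis
    unfolding mu_term_def pterm_def Let_def x y D X_def[symmetric] Y_def[symmetric] gg
      g_def[symmetric] z
    using r by simp
qed

lemma mu_le:
  assumes "\<And>s t. (s, t) \<noteq> (0, 0) \<Longrightarrow> mu_term n \<xi> \<xi>' s t \<le> C"
  shows "mu_n n \<xi> \<xi>' \<le> C"
  unfolding mu_n_def
proof (rule SUP_least)
  fix p :: "int \<times> int" assume "p \<in> UNIV - {(0, 0)}"
  then show "mu_term n \<xi> \<xi>' (fst p) (snd p) \<le> C" using assms[of "fst p" "snd p"] by auto
qed

lemma to_pair:
  assumes cop: "coprime p q" and det: "a * d - b * c \<noteq> 0"
    and bnd: "\<And>s t. (s, t) \<noteq> (0, 0) \<Longrightarrow> pterm n a b c d p q s t \<le> ereal C"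
  shows "\<exists>\<xi> \<xi>'. \<xi> \<noteq> \<xi>' \<and> mu_n n \<xi> \<xi>' \<le> ereal C"
proof -
  obtain u v where uv: "u * p + v * q = gcd p q" using bezout_int by blast
  with cop have uv1: "u * p + v * q = 1" by simp
  have hdet: "q * v - u * (- p) = 1" using uv1 by (simp add: algebra_simps)
  define a' where "a' = a * of_int q + b * of_int (- p)"
  define b' where "b' = a * of_int u + b * of_int v"
  define c' where "c' = c * of_int q + d * of_int (- p)"
  define d' where "d' = c * of_int u + d * of_int v"
  have w1: "p * q + q * (- p) = 0" by simp
  have w2: "p * u + q * v = 1" using uv1 by (simp add: algebra_simps)
  have bnd': "pterm n a' b' c' d' 0 1 s t \<le> ereal C" if "(s, t) \<noteq> (0, 0)" for s t
  proof -
    have "pterm n a' b' c' d' 0 1 s t = pterm n a b c d p q (q * s + u * t) ((- p) * s + v * t)"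
      using pterm_transform[OF hdet, of n a b c d p q s t] unfolding a'_def b'_def c'_def d'_def w1 w2 .
    also have "\<dots> \<le> ereal C"
      by (rule bnd) (rule transform_nonzero[OF hdet that])
    finally show ?thesis .
  qed
  have det': "a' * d' - b' * c' = a * d - b * c"
  proof -
    have "a' * d' - b' * c' = (a * d - b * c) * of_int (q * v - u * (- p))"
      unfolding a'_def b'_def c'_def d'_def by (simp add: algebra_simps)
    then show ?thesis by (simp only: hdet of_int_1 mult_1_right)
  qed
  have "pterm n a' b' c' d' 0 1 1 0 \<le> ereal C" using bnd'[of 1 0] by simp
  then have ac: "a' \<noteq> 0 \<and> c' \<noteq> 0" unfolding pterm_def Let_def by (auto split: if_splits)
  have "mu_n n (- b' / a') (- d' / c') \<le> ereal C"
  proof (rule mu_le)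
    fix s t :: int assume "(s, t) \<noteq> (0, 0)"
    then show "mu_term n (- b' / a') (- d' / c') s t \<le> ereal C"
      using mu_term_pterm[of a' c' n b' d' s t] ac bnd' by simp
  qed
  moreover have "- b' / a' \<noteq> - d' / c'"
  proof
    assume "- b' / a' = - d' / c'"
    then have "a' * d' - b' * c' = 0" using ac by (simp add: field_simps)
    then show False using det det' by simp
  qed
  ultimately show ?thesis by blast
qed

lemma abs_le_sqrtI: "(x::real)\<^sup>2 \<le> y \<Longrightarrow> \<bar>x\<bar> \<le> sqrt y"
  by (rule real_le_rsqrt) simp

lemma good_basis:
  fixes a b c d :: real and u1 u2 :: int
  assumes det: "\<bar>a * d - b * c\<bar> = 1" and cop: "coprime u1 u2"
    and r: "r > 0"
    and lo: "r \<le> (a * of_int u1 + b * of_int u2)\<^sup>2 + (c * of_int u1 + d * of_int u2)\<^sup>2"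
    and hi: "(a * of_int u1 + b * of_int u2)\<^sup>2 + (c * of_int u1 + d * of_int u2)\<^sup>2 \<le> R"
  obtains h11 h12 h21 h22 :: int where "h11 * h22 - h12 * h21 = 1"
    "\<bar>a * of_int h11 + b * of_int h21\<bar> \<le> sqrt (R + 1 / r)"
    "\<bar>a * of_int h12 + b * of_int h22\<bar> \<le> sqrt (R + 1 / r)"
    "\<bar>c * of_int h11 + d * of_int h21\<bar> \<le> sqrt (R + 1 / r)"
    "\<bar>c * of_int h12 + d * of_int h22\<bar> \<le> sqrt (R + 1 / r)"
proof -
  obtain x y where xy: "x * u1 + y * u2 = gcd u1 u2" using bezout_int by blast
  with cop have xy1: "x * u1 + y * u2 = 1" by simp
  define U1 where "U1 = a * of_int u1 + b * of_int u2"
  define U2 where "U2 = c * of_int u1 + d * of_int u2"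
  define W1 where "W1 = a * of_int (- y) + b * of_int x"
  define W2 where "W2 = c * of_int (- y) + d * of_int x"
  define N where "N = U1\<^sup>2 + U2\<^sup>2"
  have Npos: "N \<ge> r" "N \<le> R" using lo hi unfolding N_def U1_def U2_def by auto
  with r have N0: "N > 0" by simp
  define k where "k = \<lfloor>1 / 2 - (U1 * W1 + U2 * W2) / N\<rfloor>"
  define V1 where "V1 = W1 + of_int k * U1"
  define V2 where "V2 = W2 + of_int k * U2"
  have dot: "U1 * V1 + U2 * V2 = (U1 * W1 + U2 * W2) + of_int k * N"
    unfolding V1_def V2_def N_def by (simp add: algebra_simps power2_eq_square)
  have k1: "of_int k \<le> 1 / 2 - (U1 * W1 + U2 * W2) / N"
    unfolding k_def by (rule of_int_floor_le)
  have k2: "1 / 2 - (U1 * W1 + U2 * W2) / N < of_int k + 1"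
    unfolding k_def by (rule real_of_int_floor_add_one_gt)
  have "\<bar>(U1 * V1 + U2 * V2) / N\<bar> \<le> 1 / 2"
  proof -
    have "(U1 * V1 + U2 * V2) / N = (U1 * W1 + U2 * W2) / N + of_int k"
      using dot N0 by (simp add: field_simps)
    then show ?thesis using k1 k2 by linarith
  qed
  then have dotb: "\<bar>U1 * V1 + U2 * V2\<bar> \<le> N / 2"
    using N0 by (simp add: abs_div field_simps)
  have hdet: "u1 * (x + k * u2) - (- y + k * u1) * u2 = 1"
    using xy1 by (simp add: algebra_simps)
  have V1e: "V1 = a * of_int (- y + k * u1) + b * of_int (x + k * u2)"
    unfolding V1_def W1_def U1_def by (simp add: algebra_simps)
  have V2e: "V2 = c * of_int (- y + k * u1) + d * of_int (x + k * u2)"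
    unfolding V2_def W2_def U2_def by (simp add: algebra_simps)
  have crs: "\<bar>U1 * V2 - U2 * V1\<bar> = 1"
  proof -
    have "U1 * V2 - U2 * V1 = (a * d - b * c) * of_int (u1 * (x + k * u2) - (- y + k * u1) * u2)"
      unfolding V1e V2e U1_def U2_def by (simp add: algebra_simps)
    then show ?thesis using det by (simp only: hdet of_int_1 mult_1_right)
  qed
  have lag: "N * (V1\<^sup>2 + V2\<^sup>2) = (U1 * V1 + U2 * V2)\<^sup>2 + (U1 * V2 - U2 * V1)\<^sup>2"
    unfolding N_def by (simp add: algebra_simps power2_eq_square)
  have "(U1 * V1 + U2 * V2)\<^sup>2 \<le> (N / 2)\<^sup>2"
    using dotb by (metis abs_ge_zero power2_abs power_mono)
  moreover have "(U1 * V2 - U2 * V1)\<^sup>2 = 1" using crs by (metis power2_abs power_one)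
  moreover have "(N / 2)\<^sup>2 = N\<^sup>2 / 4" by (simp add: power2_eq_square)
  ultimately have "N * (V1\<^sup>2 + V2\<^sup>2) \<le> N\<^sup>2 / 4 + 1"
    unfolding lag by linarith
  then have "V1\<^sup>2 + V2\<^sup>2 \<le> N / 4 + 1 / N"
    using N0 by (simp add: field_simps power2_eq_square)
  also have "\<dots> \<le> R + 1 / r"
  proof -
    have "1 / N \<le> 1 / r" using Npos r by (simp add: frac_le)
    then show ?thesis using Npos N0 by simp
  qed
  finally have Vb: "V1\<^sup>2 + V2\<^sup>2 \<le> R + 1 / r" .
  have Ub: "U1\<^sup>2 + U2\<^sup>2 \<le> R + 1 / r" using Npos r unfolding N_def
    by (smt (verit) divide_pos_pos)
  show ?thesis
  proof (rule that[OF hdet])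
    show "\<bar>a * of_int u1 + b * of_int u2\<bar> \<le> sqrt (R + 1 / r)"
      using Ub unfolding U1_def[symmetric] by (intro abs_le_sqrtI) (smt (verit) zero_le_power2)
    show "\<bar>c * of_int u1 + d * of_int u2\<bar> \<le> sqrt (R + 1 / r)"
      using Ub unfolding U2_def[symmetric] by (intro abs_le_sqrtI) (smt (verit) zero_le_power2)
    show "\<bar>a * of_int (- y + k * u1) + b * of_int (x + k * u2)\<bar> \<le> sqrt (R + 1 / r)"
      using Vb unfolding V1e[symmetric] by (intro abs_le_sqrtI) (smt (verit) zero_le_power2)
    show "\<bar>c * of_int (- y + k * u1) + d * of_int (x + k * u2)\<bar> \<le> sqrt (R + 1 / r)"
      using Vb unfolding V2e[symmetric] by (intro abs_le_sqrtI) (smt (verit) zero_le_power2)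
  qed
qed

lemma gcd_weight_cong:
  fixes P Q p q s t m :: int
  assumes "P mod m = p mod m" "Q mod m = q mod m"
  shows "gcd (P * s + Q * t) m = gcd (p * s + q * t) m"
proof -
  have "(P * s + Q * t) mod m = (p * s + q * t) mod m"
    using mod_add_cong[OF mod_mult_cong[OF assms(1), of s s] mod_mult_cong[OF assms(2), of t t]] by blast
  then show ?thesis using gcd_red_int[of "P * s + Q * t" m] gcd_red_int[of "p * s + q * t" m] by simp
qed

lemma KCL_conv:
  fixes A B Cc D :: "nat \<Rightarrow> real" and P Q :: "nat \<Rightarrow> int"
  assumes lA: "A \<longlonglongrightarrow> a" and lB: "B \<longlonglongrightarrow> b" and lC: "Cc \<longlonglongrightarrow> c" and lD: "D \<longlonglongrightarrow> d"
    and det: "\<And>k. \<bar>A k * D k - B k * Cc k\<bar> = 1"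
    and wt: "\<And>k. P k mod int n = p mod int n \<and> Q k mod int n = q mod int n"
    and n: "n > 0"
    and ev: "\<And>s t e. (s, t) \<noteq> (0, 0) \<Longrightarrow> e > 0 \<Longrightarrow>
       eventually (\<lambda>k. pterm n (A k) (B k) (Cc k) (D k) (P k) (Q k) s t \<le> ereal (C + e)) sequentially"
  shows "\<bar>a * d - b * c\<bar> = 1"
    and "\<And>s t. (s, t) \<noteq> (0, 0) \<Longrightarrow> pterm n a b c d p q s t \<le> ereal C"
proof -
  have lDet: "(\<lambda>k. \<bar>A k * D k - B k * Cc k\<bar>) \<longlonglongrightarrow> \<bar>a * d - b * c\<bar>"
    by (intro tendsto_intros lA lB lC lD)
  then show det1: "\<bar>a * d - b * c\<bar> = 1" using det LIMSEQ_unique[OF _ tendsto_const] by (simp add: det)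
  fix s t :: int assume st: "(s, t) \<noteq> (0, 0)"
  define X where "X k = A k * of_int s + B k * of_int t" for k
  define Y where "Y k = Cc k * of_int s + D k * of_int t" for k
  define x where "x = a * of_int s + b * of_int t"
  define y where "y = c * of_int s + d * of_int t"
  have lX: "X \<longlonglongrightarrow> x" unfolding X_def x_def by (intro tendsto_intros lA lB)
  have lY: "Y \<longlonglongrightarrow> y" unfolding Y_def y_def by (intro tendsto_intros lC lD)
  define g where "g = real_of_int (gcd (p * s + q * t) (int n))"
  have g1: "g \<ge> 1" unfolding g_def using n
  proof -
    have "gcd (p * s + q * t) (int n) > 0" using n by (simp add: gcd_pos_int)
    then show "real_of_int (gcd (p * s + q * t) (int n)) \<ge> 1" by linarith
  qed
  have wk: "real_of_int (gcd (P k * s + Q k * t) (int n)) = g" for k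
    unfolding g_def using gcd_weight_cong[of "P k" "int n" p "Q k" q s t] wt[of k] by simp
  have pt: "pterm n (A k) (B k) (Cc k) (D k) (P k) (Q k) s t =
       (if X k * Y k = 0 then \<infinity> else ereal (g / \<bar>X k * Y k\<bar>))" for k
    unfolding pterm_def Let_def X_def[symmetric] Y_def[symmetric] wk det by simp
  show "pterm n a b c d p q s t \<le> ereal C"
  proof (cases "x * y = 0")
    case True
    have "(\<lambda>k. X k * Y k) \<longlonglongrightarrow> 0" using tendsto_mult[OF lX lY] True by simp
    then have e1: "eventually (\<lambda>k. \<bar>X k * Y k\<bar> < 1 / (\<bar>C\<bar> + 2)) sequentially"
      by (rule order_tendstoD(2)[OF tendsto_rabs_zero]) simp
    have e2: "eventually (\<lambda>k. pterm n (A k) (B k) (Cc k) (D k) (P k) (Q k) s t \<le> ereal (C + 1)) sequentially"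
      using ev[OF st, of 1] by simp
    have "eventually (\<lambda>k. False) sequentially"
      using e1 e2
    proof eventually_elim
      case (elim k)
      show False
      proof (cases "X k * Y k = 0")
        case True then show ?thesis using elim(2) unfolding pt by simp
      next
        case False
        then have pos: "\<bar>X k * Y k\<bar> > 0" by simp
        have "g / \<bar>X k * Y k\<bar> \<ge> 1 / \<bar>X k * Y k\<bar>" using g1 pos by (simp add: divide_right_mono)
        moreover have "1 / \<bar>X k * Y k\<bar> > \<bar>C\<bar> + 2"
        proof -
          have c2: "\<bar>C\<bar> + 2 > 0" by simp
          have "\<bar>X k * Y k\<bar> * (\<bar>C\<bar> + 2) < 1" using elim(1) c2 by (simp add: less_divide_eq)
          then show ?thesis using pos by (simp add: less_divide_eq mult.commute)
        qed
        moreover have "g / \<bar>X k * Y k\<bar> \<le> C + 1" using elim(2) False unfolding pt by simp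
        ultimately show False by linarith
      qed
    qed
    then show ?thesis by simp
  next
    case False
    have lq: "(\<lambda>k. g / \<bar>X k * Y k\<bar>) \<longlonglongrightarrow> g / \<bar>x * y\<bar>"
      using False by (intro tendsto_intros lX lY) simp
    have ne: "eventually (\<lambda>k. X k * Y k \<noteq> 0) sequentially"
      using tendsto_mult[OF lX lY] False by (rule tendsto_imp_eventually_ne)
    have "g / \<bar>x * y\<bar> \<le> C + e" if e: "e > 0" for e
    proof -
      have "eventually (\<lambda>k. g / \<bar>X k * Y k\<bar> \<le> C + e) sequentially"
        using ev[OF st e] ne
      proof eventually_elim
        case (elim k) then show ?case unfolding pt by simp
      qed
      then obtain N where "\<forall>k\<ge>N. g / \<bar>X k * Y k\<bar> \<le> C + e" by (auto simp: eventually_sequentially)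
      then show ?thesis using LIMSEQ_le_const2[OF lq] by blast
    qed
    then have "g / \<bar>x * y\<bar> \<le> C" by (meson field_le_epsilon)
    moreover have "pterm n a b c d p q s t = ereal (g / \<bar>x * y\<bar>)"
      unfolding pterm_def Let_def x_def[symmetric] y_def[symmetric] g_def[symmetric] det1
      using False by simp
    ultimately show ?thesis by simp
  qed
qed

lemma int_close_eq:
  fixes i j :: int and z :: real
  assumes "\<bar>of_int i - z\<bar> < 1 / 2" "\<bar>of_int j - z\<bar> < 1 / 2"
  shows "i = j"
proof -
  have "\<bar>of_int i - of_int j :: real\<bar> < 1" using assms by linarith
  then have "\<bar>i - j\<bar> < 1" by linarith
  then show ?thesis by simp
qed

lemma KCL:
  fixes A B Cc D :: "nat \<Rightarrow> real" and P Q :: "nat \<Rightarrow> int"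
  assumes det: "\<And>k. \<bar>A k * D k - B k * Cc k\<bar> = 1"
    and bA: "\<And>k. \<bar>A k\<bar> \<le> K" and bB: "\<And>k. \<bar>B k\<bar> \<le> K"
    and bC: "\<And>k. \<bar>Cc k\<bar> \<le> K" and bD: "\<And>k. \<bar>D k\<bar> \<le> K"
    and cop: "\<And>k. coprime (P k) (Q k)"
    and n: "n > 0"
    and ev: "\<And>s t e. (s, t) \<noteq> (0, 0) \<Longrightarrow> e > 0 \<Longrightarrow>
       eventually (\<lambda>k. pterm n (A k) (B k) (Cc k) (D k) (P k) (Q k) s t \<le> ereal (C + e)) sequentially"
  shows "\<exists>\<xi> \<xi>'. \<xi> \<noteq> \<xi>' \<and> mu_n n \<xi> \<xi>' \<le> ereal C"
proof -
  define f where "f k = (((A k, B k), (Cc k, D k)),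
       (real_of_int (P k mod int n), real_of_int (Q k mod int n)))" for k
  define I where "I = {-K..K::real}"
  define J where "J = {0..real n}"
  have "range f \<subseteq> ((I \<times> I) \<times> (I \<times> I)) \<times> (J \<times> J)"
  proof
    fix z assume "z \<in> range f"
    then obtain k where z: "z = f k" by auto
    have "P k mod int n \<ge> 0" "P k mod int n < int n" "Q k mod int n \<ge> 0" "Q k mod int n < int n"
      using n by auto
    then have "real_of_int (P k mod int n) \<le> real_of_int (int n)"
          "real_of_int (Q k mod int n) \<le> real_of_int (int n)"
          "real_of_int (P k mod int n) \<ge> 0" "real_of_int (Q k mod int n) \<ge> 0"
      by (simp_all only: of_int_le_iff of_int_0_le_iff)
    then have "real_of_int (P k mod int n) \<in> J" "real_of_int (Q k mod int n) \<in> J"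
      unfolding J_def by auto
    moreover have "A k \<in> I" "B k \<in> I" "Cc k \<in> I" "D k \<in> I"
      unfolding I_def using bA[of k] bB[of k] bC[of k] bD[of k] by auto
    ultimately show "z \<in> ((I \<times> I) \<times> (I \<times> I)) \<times> (J \<times> J)" unfolding z f_def by auto
  qed
  moreover have "bounded (((I \<times> I) \<times> (I \<times> I)) \<times> (J \<times> J))"
    unfolding I_def J_def by (intro bounded_Times) simp_all
  ultimately have "bounded (range f)" by (rule bounded_subset[rotated])
  then obtain l r where r: "strict_mono r" and lim: "(f \<circ> r) \<longlonglongrightarrow> l"
    using bounded_imp_convergent_subsequence by blast
  obtain a b c d pp qq where l: "l = (((a, b), (c, d)), (pp, qq))" by (metis prod.collapse)
  have lA: "(\<lambda>k. A (r k)) \<longlonglongrightarrow> a"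
    using tendsto_fst[OF tendsto_fst[OF tendsto_fst[OF lim]]] unfolding l f_def o_def by simp
  have lB: "(\<lambda>k. B (r k)) \<longlonglongrightarrow> b"
    using tendsto_snd[OF tendsto_fst[OF tendsto_fst[OF lim]]] unfolding l f_def o_def by simp
  have lC: "(\<lambda>k. Cc (r k)) \<longlonglongrightarrow> c"
    using tendsto_fst[OF tendsto_snd[OF tendsto_fst[OF lim]]] unfolding l f_def o_def by simp
  have lD: "(\<lambda>k. D (r k)) \<longlonglongrightarrow> d"
    using tendsto_snd[OF tendsto_snd[OF tendsto_fst[OF lim]]] unfolding l f_def o_def by simp
  have lP: "(\<lambda>k. real_of_int (P (r k) mod int n)) \<longlonglongrightarrow> pp"
    using tendsto_fst[OF tendsto_snd[OF lim]] unfolding l f_def o_def by simp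
  have lQ: "(\<lambda>k. real_of_int (Q (r k) mod int n)) \<longlonglongrightarrow> qq"
    using tendsto_snd[OF tendsto_snd[OF lim]] unfolding l f_def o_def by simp
  have "eventually (\<lambda>k. dist (real_of_int (P (r k) mod int n)) pp < 1 / 2) sequentially"
    using lP by (rule tendstoD) simp
  moreover have "eventually (\<lambda>k. dist (real_of_int (Q (r k) mod int n)) qq < 1 / 2) sequentially"
    using lQ by (rule tendstoD) simp
  ultimately obtain N where N: "\<And>k. k \<ge> N \<Longrightarrow>
      \<bar>real_of_int (P (r k) mod int n) - pp\<bar> < 1 / 2 \<and> \<bar>real_of_int (Q (r k) mod int n) - qq\<bar> < 1 / 2"
    unfolding eventually_sequentially dist_real_def
    by (metis (no_types, lifting) eventually_conj eventually_sequentially)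
  define p where "p = P (r N)"
  define q where "q = Q (r N)"
  have wt: "P (r (k + N)) mod int n = p mod int n \<and> Q (r (k + N)) mod int n = q mod int n" for k
    unfolding p_def q_def
    using N[of "k + N"] N[of N] int_close_eq by auto
  have sm: "filterlim (\<lambda>k. r (k + N)) sequentially sequentially"
  proof (rule filterlim_subseq)
    show "strict_mono (\<lambda>k. r (k + N))" using r unfolding strict_mono_def by simp
  qed
  have conv:
    "\<bar>a * d - b * c\<bar> = 1"
    "\<And>s t. (s, t) \<noteq> (0, 0) \<Longrightarrow> pterm n a b c d p q s t \<le> ereal C"
  proof -
    have lA': "(\<lambda>k. A (r (k + N))) \<longlonglongrightarrow> a" using LIMSEQ_ignore_initial_segment[OF lA, of N] .
    have lB': "(\<lambda>k. B (r (k + N))) \<longlonglongrightarrow> b" using LIMSEQ_ignore_initial_segment[OF lB, of N] .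
    have lC': "(\<lambda>k. Cc (r (k + N))) \<longlonglongrightarrow> c" using LIMSEQ_ignore_initial_segment[OF lC, of N] .
    have lD': "(\<lambda>k. D (r (k + N))) \<longlonglongrightarrow> d" using LIMSEQ_ignore_initial_segment[OF lD, of N] .
    note * = KCL_conv[OF lA' lB' lC' lD' det wt n, where C=C]
    have ev': "eventually (\<lambda>k. pterm n (A (r (k + N))) (B (r (k + N))) (Cc (r (k + N))) (D (r (k + N)))
         (P (r (k + N))) (Q (r (k + N))) s t \<le> ereal (C + e)) sequentially"
      if "(s, t) \<noteq> (0, 0)" "e > 0" for s t e
      using eventually_compose_filterlim[OF ev[OF that] sm] .
    show "\<bar>a * d - b * c\<bar> = 1" using *(1)[OF ev'] .
    show "pterm n a b c d p q s t \<le> ereal C" if "(s, t) \<noteq> (0, 0)" for s t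
      using *(2)[OF ev' that] .
  qed
  show ?thesis
  proof (rule to_pair)
    show "coprime p q" unfolding p_def q_def by (rule cop)
    show "a * d - b * c \<noteq> 0" using conv(1) by auto
    show "pterm n a b c d p q s t \<le> ereal C" if "(s, t) \<noteq> (0, 0)" for s t
      using conv(2)[OF that] .
  qed
qed

lemma pterm_neg: "pterm n a b c d p q (- s) (- t) = pterm n a b c d p q s t"
proof -
  have "gcd (p * - s + q * - t) (int n) = gcd (p * s + q * t) (int n)"
    by (metis gcd_neg1_int minus_add_distrib mult_minus_right)
  moreover have "(a * of_int (- s) + b * of_int (- t)) * (c * of_int (- s) + d * of_int (- t))
      = (a * of_int s + b * of_int t) * (c * of_int s + d * of_int t)"
    by (simp add: algebra_simps)
  ultimately show ?thesis unfolding pterm_def Let_def by simp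
qed

lemma lam_pterm:
  assumes N: "N > 0" and t: "t > 0"
  shows "pterm n N (- N * \<xi>) 0 (1 / N) 0 1 s t = lam_term n \<xi> s t"
proof -
  have tt: "real_of_int t > 0" using t by simp
  have xy: "(N * of_int s + - N * \<xi> * of_int t) * (0 * of_int s + 1 / N * of_int t)
      = of_int t * (of_int s - of_int t * \<xi>)"
    using N by (simp add: field_simps)
  have det: "N * (1 / N) - - N * \<xi> * 0 = 1" using N by simp
  have eq: "(of_int s / of_int t = \<xi>) = (of_int t * (of_int s - of_int t * \<xi>) = 0)"
    using tt by (auto simp: field_simps)
  have den: "(of_int t)\<^sup>2 * \<bar>of_int s / of_int t - \<xi>\<bar> = \<bar>of_int t * (of_int s - of_int t * \<xi>)\<bar>"
  proof -
    have "of_int s / of_int t - \<xi> = (of_int s - of_int t * \<xi>) / of_int t" using tt by (simp add: field_simps)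
    then show ?thesis using tt by (simp add: abs_mult power2_eq_square abs_div)
  qed
  show ?thesis
    unfolding pterm_def lam_term_def Let_def xy det eq den by simp
qed

lemma lambda_bound:
  assumes lam: "lambda_n n \<xi> = ereal L" and e: "e > 0"
  obtains \<epsilon> where "\<epsilon> > 0" "\<And>s t. t > 0 \<Longrightarrow> \<bar>of_int s / of_int t - \<xi>\<bar> < \<epsilon> \<Longrightarrow>
      lam_term n \<xi> s t \<le> ereal (L + e)"
proof -
  have "lambda_n n \<xi> < ereal (L + e)" using lam e by simp
  then obtain \<epsilon> where \<epsilon>: "\<epsilon> \<in> {0<..}" and
    lt: "(SUP p\<in>{(s, t). t > 0 \<and> \<bar>of_int s / of_int t - \<xi>\<bar> < \<epsilon>}. lam_term n \<xi> (fst p) (snd p)) < ereal (L + e)"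
    unfolding lambda_n_def by (auto simp: INF_less_iff)
  show ?thesis
  proof (rule that)
    show "\<epsilon> > 0" using \<epsilon> by simp
    fix s t :: int assume "t > 0" "\<bar>of_int s / of_int t - \<xi>\<bar> < \<epsilon>"
    then have "(s, t) \<in> {(s, t). t > 0 \<and> \<bar>of_int s / of_int t - \<xi>\<bar> < \<epsilon>}" by simp
    then have "lam_term n \<xi> s t \<le> (SUP p\<in>{(s, t). t > 0 \<and> \<bar>of_int s / of_int t - \<xi>\<bar> < \<epsilon>}. lam_term n \<xi> (fst p) (snd p))"
      by (metis (no_types, lifting) SUP_upper fst_conv snd_conv)
    then show "lam_term n \<xi> s t \<le> ereal (L + e)" using lt by simp
  qed
qed

lemma det1_coprime:
  fixes h11 h12 h21 h22 :: int
  assumes "h11 * h22 - h12 * h21 = 1"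
  shows "coprime h21 h22"
proof (rule coprimeI)
  fix c assume "c dvd h21" "c dvd h22"
  then have "c dvd h11 * h22 - h12 * h21" by (simp add: dvd_diff)
  then show "is_unit c" using assms by simp
qed

lemma form_bound:
  fixes A B :: real and s t :: int
  assumes "\<bar>A\<bar> \<le> K" "\<bar>B\<bar> \<le> K"
  shows "\<bar>A * of_int s + B * of_int t\<bar> \<le> K * (\<bar>of_int s\<bar> + \<bar>of_int t\<bar>)"
proof -
  have "\<bar>A * of_int s + B * of_int t\<bar> \<le> \<bar>A\<bar> * \<bar>of_int s\<bar> + \<bar>B\<bar> * \<bar>of_int t\<bar>"
    by (metis abs_mult abs_triangle_ineq)
  also have "\<dots> \<le> K * \<bar>of_int s\<bar> + K * \<bar>of_int t\<bar>"
    using assms by (intro add_mono mult_right_mono) auto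
  finally show ?thesis by (simp add: algebra_simps)
qed

lemma det_transform:
  fixes a b c d :: real and h11 h12 h21 h22 :: int
  shows "(a * of_int h11 + b * of_int h21) * (c * of_int h12 + d * of_int h22) -
        (a * of_int h12 + b * of_int h22) * (c * of_int h11 + d * of_int h21)
        = (a * d - b * c) * of_int (h11 * h22 - h12 * h21)"
  by (simp add: algebra_simps)

lemma lambda_to_mu:
  assumes n: "n > 0" and lam: "lambda_n n \<xi> = ereal L"
  shows "\<exists>\<eta> \<eta>'. \<eta> \<noteq> \<eta>' \<and> mu_n n \<eta> \<eta>' \<le> ereal L"
proof -
  obtain \<epsilon>1 where \<epsilon>1: "\<epsilon>1 > 0" and
    lb1: "\<And>s t. t > 0 \<Longrightarrow> \<bar>of_int s / of_int t - \<xi>\<bar> < \<epsilon>1 \<Longrightarrow> lam_term n \<xi> s t \<le> ereal (L + 1)"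
    using lambda_bound[OF lam, of 1] by auto
  define K0 :: nat where "K0 = nat \<lceil>1 / \<epsilon>1\<rceil> + 1"
  define Nk where "Nk k = real (k + K0)" for k
  have Npos: "Nk k > 0" for k unfolding Nk_def K0_def by simp
  have Nge: "Nk k \<ge> real k + 1" for k unfolding Nk_def K0_def by simp
  have Neps: "1 / Nk k < \<epsilon>1" for k
  proof -
    have "1 / \<epsilon>1 \<le> real (nat \<lceil>1 / \<epsilon>1\<rceil>)" by (rule real_nat_ceiling_ge)
    then have "Nk k > 1 / \<epsilon>1" unfolding Nk_def K0_def by simp
    then show ?thesis using \<epsilon>1 Npos[of k] by (simp add: field_simps)
  qed
  define Lp where "Lp = \<bar>L\<bar> + 1"
  have Lp: "Lp > 0" "L + 1 \<le> Lp" unfolding Lp_def by auto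
  define Kb where "Kb = sqrt (2 + 1 / (2 / Lp))"
  have ex: "\<exists>h11 h12 h21 h22. h11 * h22 - h12 * h21 = 1 \<and>
      \<bar>Nk k * of_int h11 + (- Nk k * \<xi>) * of_int h21\<bar> \<le> Kb \<and>
      \<bar>Nk k * of_int h12 + (- Nk k * \<xi>) * of_int h22\<bar> \<le> Kb \<and>
      \<bar>0 * of_int h11 + (1 / Nk k) * of_int h21\<bar> \<le> Kb \<and>
      \<bar>0 * of_int h12 + (1 / Nk k) * of_int h22\<bar> \<le> Kb" for k
  proof -
    define N where "N = Nk k"
    have N0: "N > 0" unfolding N_def by (rule Npos)
    obtain hh kk where cop: "coprime hh kk" and kk: "0 < kk" "kk \<le> int (k + K0)"
      and app: "\<bar>of_int kk * \<xi> - of_int hh\<bar> < 1 / real (k + K0)"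
      using Dirichlet_approx_coprime[of "k + K0" \<xi>] unfolding K0_def by auto
    have app': "\<bar>of_int kk * \<xi> - of_int hh\<bar> < 1 / N" using app unfolding N_def Nk_def .
    define x where "x = N * of_int hh + (- N * \<xi>) * of_int kk"
    define y where "y = 0 * of_int hh + (1 / N) * of_int kk"
    have xe: "x = - N * (of_int kk * \<xi> - of_int hh)" unfolding x_def by (simp add: algebra_simps)
    have "\<bar>x\<bar> < 1"
    proof -
      have "\<bar>x\<bar> = N * \<bar>of_int kk * \<xi> - of_int hh\<bar>" unfolding xe using N0 by (simp add: abs_mult)
      also have "\<dots> < N * (1 / N)" using app' N0 by (intro mult_strict_left_mono) auto
      finally show ?thesis using N0 by simp
    qed
    have ky: "real_of_int kk \<le> N" using kk unfolding N_def Nk_def by simp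
    have "0 < y" "y \<le> 1" unfolding y_def using kk N0 ky by (auto simp: field_simps)
    have hi: "x\<^sup>2 + y\<^sup>2 \<le> 2"
    proof -
      have "x\<^sup>2 \<le> 1" using \<open>\<bar>x\<bar> < 1\<close> by (metis abs_square_le_1 less_le)
      moreover have "y\<^sup>2 \<le> 1" using \<open>0 < y\<close> \<open>y \<le> 1\<close> by (simp add: power_le_one)
      ultimately show ?thesis by simp
    qed
    have close: "\<bar>of_int hh / of_int kk - \<xi>\<bar> < \<epsilon>1"
    proof -
      have kk1: "real_of_int kk \<ge> 1" using kk by simp
      have "\<bar>of_int hh / of_int kk - \<xi>\<bar> = \<bar>of_int kk * \<xi> - of_int hh\<bar> / of_int kk"
        using kk1 by (simp add: field_simps abs_div abs_minus_commute)
      also have "\<dots> \<le> \<bar>of_int kk * \<xi> - of_int hh\<bar> / 1" using kk1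
        by (intro divide_left_mono) auto
      also have "\<dots> = \<bar>of_int kk * \<xi> - of_int hh\<bar>" by simp
      also have "\<dots> < 1 / N" by (rule app')
      also have "\<dots> < \<epsilon>1" using Neps[of k] unfolding N_def .
      finally show ?thesis .
    qed
    have "pterm n N (- N * \<xi>) 0 (1 / N) 0 1 hh kk \<le> ereal (L + 1)"
      using lam_pterm[OF N0 kk(1), of n \<xi> hh] lb1[OF kk(1) close] by simp
    then have xy0: "x * y \<noteq> 0" and
      le: "real_of_int (gcd (0 * hh + 1 * kk) (int n)) * \<bar>N * (1 / N) - - N * \<xi> * 0\<bar> / \<bar>x * y\<bar> \<le> L + 1"
      unfolding pterm_def Let_def x_def[symmetric] y_def[symmetric] by (auto split: if_splits)
    have g1: "real_of_int (gcd (0 * hh + 1 * kk) (int n)) \<ge> 1"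
    proof -
      have "gcd (0 * hh + 1 * kk) (int n) > 0" using n by simp
      then show ?thesis by linarith
    qed
    have "1 / \<bar>x * y\<bar> \<le> Lp"
    proof -
      have "\<bar>N * (1 / N) - - N * \<xi> * 0\<bar> = 1" using N0 by simp
      then have "real_of_int (gcd (0 * hh + 1 * kk) (int n)) / \<bar>x * y\<bar> \<le> L + 1" using le by simp
      moreover have "1 / \<bar>x * y\<bar> \<le> real_of_int (gcd (0 * hh + 1 * kk) (int n)) / \<bar>x * y\<bar>"
        using g1 xy0 by (simp add: divide_right_mono)
      ultimately show ?thesis using Lp by linarith
    qed
    then have "1 \<le> Lp * \<bar>x * y\<bar>" using xy0 by (simp add: divide_le_eq)
    then have "\<bar>x * y\<bar> \<ge> 1 / Lp" using Lp by (simp add: divide_le_eq mult.commute)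
    moreover have "x\<^sup>2 + y\<^sup>2 \<ge> 2 * \<bar>x * y\<bar>"
    proof -
      have "0 \<le> (\<bar>x\<bar> - \<bar>y\<bar>)\<^sup>2" by simp
      then have "0 \<le> \<bar>x\<bar>\<^sup>2 + \<bar>y\<bar>\<^sup>2 - 2 * \<bar>x\<bar> * \<bar>y\<bar>" by (simp add: power2_diff)
      then show ?thesis by (simp add: abs_mult)
    qed
    moreover have "2 / Lp = 2 * (1 / Lp)" by simp
    ultimately have lo: "2 / Lp \<le> x\<^sup>2 + y\<^sup>2" by linarith
    have det: "\<bar>N * (1 / N) - - N * \<xi> * 0\<bar> = 1" using N0 by simp
    obtain h11 h12 h21 h22 where H: "h11 * h22 - h12 * h21 = 1"
      "\<bar>N * of_int h11 + (- N * \<xi>) * of_int h21\<bar> \<le> sqrt (2 + 1 / (2 / Lp))"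
      "\<bar>N * of_int h12 + (- N * \<xi>) * of_int h22\<bar> \<le> sqrt (2 + 1 / (2 / Lp))"
      "\<bar>0 * of_int h11 + (1 / N) * of_int h21\<bar> \<le> sqrt (2 + 1 / (2 / Lp))"
      "\<bar>0 * of_int h12 + (1 / N) * of_int h22\<bar> \<le> sqrt (2 + 1 / (2 / Lp))"
      by (rule good_basis[OF det cop _ lo[unfolded x_def y_def] hi[unfolded x_def y_def]]) (use Lp in simp)
    then show ?thesis unfolding N_def Kb_def by blast
  qed
  then obtain H11 H12 H21 H22 where H: "\<And>k. H11 k * H22 k - H12 k * H21 k = 1 \<and>
      \<bar>Nk k * of_int (H11 k) + (- Nk k * \<xi>) * of_int (H21 k)\<bar> \<le> Kb \<and>
      \<bar>Nk k * of_int (H12 k) + (- Nk k * \<xi>) * of_int (H22 k)\<bar> \<le> Kb \<and>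
      \<bar>0 * of_int (H11 k) + (1 / Nk k) * of_int (H21 k)\<bar> \<le> Kb \<and>
      \<bar>0 * of_int (H12 k) + (1 / Nk k) * of_int (H22 k)\<bar> \<le> Kb"
    by metis
  define A where "A k = Nk k * of_int (H11 k) + (- Nk k * \<xi>) * of_int (H21 k)" for k
  define B where "B k = Nk k * of_int (H12 k) + (- Nk k * \<xi>) * of_int (H22 k)" for k
  define Cc where "Cc k = 0 * of_int (H11 k) + (1 / Nk k) * of_int (H21 k)" for k
  define D where "D k = 0 * of_int (H12 k) + (1 / Nk k) * of_int (H22 k)" for k
  define P where "P k = 0 * H11 k + 1 * H21 k" for k
  define Q where "Q k = 0 * H12 k + 1 * H22 k" for k
  have PT: "pterm n (A k) (B k) (Cc k) (D k) (P k) (Q k) s t =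
      pterm n (Nk k) (- Nk k * \<xi>) 0 (1 / Nk k) 0 1 (H11 k * s + H12 k * t) (H21 k * s + H22 k * t)" for k s t
    unfolding A_def B_def Cc_def D_def P_def Q_def
    by (rule pterm_transform) (use H[of k] in blast)
  show ?thesis
  proof (rule KCL[where A=A and B=B and Cc=Cc and D=D and P=P and Q=Q and K=Kb])
    fix k
    have "A k * D k - B k * Cc k = (Nk k * (1 / Nk k) - (- Nk k * \<xi>) * 0) * of_int (H11 k * H22 k - H12 k * H21 k)"
      unfolding A_def B_def Cc_def D_def by (rule det_transform)
    also have "\<dots> = 1" using H[of k] Npos[of k] by simp
    finally show "\<bar>A k * D k - B k * Cc k\<bar> = 1" by simp
    show "\<bar>A k\<bar> \<le> Kb" "\<bar>B k\<bar> \<le> Kb" "\<bar>Cc k\<bar> \<le> Kb" "\<bar>D k\<bar> \<le> Kb"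
      unfolding A_def B_def Cc_def D_def using H[of k] by auto
    show "coprime (P k) (Q k)" unfolding P_def Q_def using det1_coprime[of "H11 k" "H22 k" "H12 k" "H21 k"] H[of k] by simp
  next
    show "n > 0" by (rule n)
  next
    fix s t :: int and e :: real
    assume st: "(s, t) \<noteq> (0, 0)" and e: "e > 0"
    obtain \<epsilon> where \<epsilon>: "\<epsilon> > 0" and
      lbe: "\<And>s t. t > 0 \<Longrightarrow> \<bar>of_int s / of_int t - \<xi>\<bar> < \<epsilon> \<Longrightarrow> lam_term n \<xi> s t \<le> ereal (L + e)"
      using lambda_bound[OF lam e] by blast
    define Bv where "Bv = Kb * (\<bar>of_int s\<bar> + \<bar>of_int t\<bar>)"
    have Bv0: "Bv \<ge> 0" unfolding Bv_def Kb_def using Lp by (intro mult_nonneg_nonneg) auto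
    define M where "M = nat \<lceil>Bv + Bv / \<epsilon>\<rceil>"
    show "eventually (\<lambda>k. pterm n (A k) (B k) (Cc k) (D k) (P k) (Q k) s t \<le> ereal (L + e)) sequentially"
      unfolding eventually_sequentially
    proof (intro exI allI impI)
      fix k assume kM: "k \<ge> M"
      define N where "N = Nk k"
      have N0: "N > 0" unfolding N_def by (rule Npos)
      have "Bv + Bv / \<epsilon> \<le> real M" unfolding M_def by (rule real_nat_ceiling_ge)
      moreover have "real M < N" using kM Nge[of k] unfolding N_def by simp
      moreover have "Bv / \<epsilon> \<ge> 0" using Bv0 \<epsilon> by simp
      ultimately have NB: "N > Bv" "N > Bv / \<epsilon>" using Bv0 by linarith+
      then have NB2: "Bv / N < \<epsilon>" using N0 \<epsilon> by (simp add: divide_less_eq mult.commute pos_divide_less_eq)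
      define s' where "s' = H11 k * s + H12 k * t"
      define t' where "t' = H21 k * s + H22 k * t"
      have st': "(s', t') \<noteq> (0, 0)" unfolding s'_def t'_def
        using transform_nonzero[OF _ st] H[of k] by blast
      have xe: "A k * of_int s + B k * of_int t = N * (of_int s' - of_int t' * \<xi>)"
        unfolding A_def B_def s'_def t'_def N_def by (simp add: algebra_simps)
      have xb: "\<bar>A k * of_int s + B k * of_int t\<bar> \<le> Bv"
        unfolding Bv_def by (rule form_bound) (use H[of k] A_def B_def in auto)
      have t'0: "t' \<noteq> 0"
      proof
        assume "t' = 0"
        then have "s' \<noteq> 0" using st' by simp
        then have "\<bar>real_of_int s'\<bar> \<ge> 1" by linarith
        then have "N * \<bar>of_int s'\<bar> \<ge> N" using N0 by simp
        moreover have "\<bar>A k * of_int s + B k * of_int t\<bar> = N * \<bar>of_int s'\<bar>"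
          unfolding xe using \<open>t' = 0\<close> N0 by (simp add: abs_mult)
        ultimately show False using xb NB by linarith
      qed
      have sb: "\<bar>of_int s' - of_int t' * \<xi>\<bar> < \<epsilon>"
      proof -
        have "N * \<bar>of_int s' - of_int t' * \<xi>\<bar> \<le> Bv" using xb unfolding xe using N0 by (simp add: abs_mult)
        then have "\<bar>of_int s' - of_int t' * \<xi>\<bar> \<le> Bv / N" using N0 by (simp add: le_divide_eq mult.commute)
        then show ?thesis using NB2 by linarith
      qed
      have cl: "\<bar>of_int s' / of_int t' - \<xi>\<bar> < \<epsilon>"
      proof -
        have t1: "\<bar>real_of_int t'\<bar> \<ge> 1" using t'0 by linarith
        have "of_int s' / of_int t' - \<xi> = (of_int s' - of_int t' * \<xi>) / of_int t'" using t'0 by (simp add: field_simps)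
        then have "\<bar>of_int s' / of_int t' - \<xi>\<bar> = \<bar>of_int s' - of_int t' * \<xi>\<bar> / \<bar>of_int t'\<bar>" by (simp add: abs_div)
        also have "\<dots> \<le> \<bar>of_int s' - of_int t' * \<xi>\<bar> / 1" using t1 by (intro divide_left_mono) auto
        finally show ?thesis using sb by simp
      qed
      have "pterm n N (- N * \<xi>) 0 (1 / N) 0 1 s' t' \<le> ereal (L + e)"
      proof (cases "t' > 0")
        case True
        then show ?thesis using lam_pterm[OF N0 True, of n \<xi> s'] lbe[OF True cl] by simp
      next
        case False
        then have tn: "- t' > 0" using t'0 by simp
        have cl': "\<bar>of_int (- s') / of_int (- t') - \<xi>\<bar> < \<epsilon>" using cl by simp
        have "pterm n N (- N * \<xi>) 0 (1 / N) 0 1 s' t' = pterm n N (- N * \<xi>) 0 (1 / N) 0 1 (- s') (- t')"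
          by (rule pterm_neg[symmetric])
        then show ?thesis using lam_pterm[OF N0 tn, of n \<xi> "- s'"] lbe[OF tn cl'] by simp
      qed
      then show "pterm n (A k) (B k) (Cc k) (D k) (P k) (Q k) s t \<le> ereal (L + e)"
        unfolding PT s'_def[symmetric] t'_def[symmetric] N_def[symmetric] .
    qed
  qed
qed

lemma mu_term_le_mu: "(s, t) \<noteq> (0, 0) \<Longrightarrow> mu_term n \<xi> \<xi>' s t \<le> mu_n n \<xi> \<xi>'"
  unfolding mu_n_def by (rule SUP_upper2[of "(s, t)"]) auto

lemma pterm_scale:
  assumes l: "l \<noteq> 0"
  shows "pterm n (l * a) (l * b) (c / l) (d / l) p q s t = pterm n a b c d p q s t"
proof -
  have e1: "(l * a * of_int s + l * b * of_int t) * (c / l * of_int s + d / l * of_int t)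
     = (a * of_int s + b * of_int t) * (c * of_int s + d * of_int t)"
    using l by (simp add: field_simps)
  have e2: "l * a * (d / l) - l * b * (c / l) = a * d - b * c" using l by (simp add: field_simps)
  show ?thesis unfolding pterm_def Let_def e1 e2 ..
qed

lemma aux1: "(u::real) > 0 \<Longrightarrow> v / u * (u * u) = u * v"
  by (simp add: field_simps)

lemma aux2: "(u::real) > 0 \<Longrightarrow> (v::real) > 0 \<Longrightarrow> (v * v) / (v / u) = u * v"
  by (simp add: field_simps)

lemma reduce:
  assumes n: "n > 0" and ne: "\<xi> \<noteq> \<xi>'" and mu: "mu_n n \<xi> \<xi>' \<le> ereal x" and xC: "x \<le> Cb"
  shows "\<exists>a b c d p q. \<bar>a * d - b * c\<bar> = 1 \<and> \<bar>a\<bar> \<le> sqrt (4 + 1 / (2 / Cb)) \<and>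
     \<bar>b\<bar> \<le> sqrt (4 + 1 / (2 / Cb)) \<and> \<bar>c\<bar> \<le> sqrt (4 + 1 / (2 / Cb)) \<and>
     \<bar>d\<bar> \<le> sqrt (4 + 1 / (2 / Cb)) \<and> coprime p q \<and>
     (\<forall>s t. (s, t) \<noteq> (0, 0) \<longrightarrow> pterm n a b c d p q s t \<le> ereal x)"
proof -
  define \<delta> where "\<delta> = \<bar>\<xi> - \<xi>'\<bar>"
  have \<delta>: "\<delta> > 0" unfolding \<delta>_def using ne by simp
  define a where "a = 1 / \<delta>"
  define b where "b = - \<xi> / \<delta>"
  define c :: real where "c = 1"
  define d where "d = - \<xi>'"
  have a0: "a \<noteq> 0" unfolding a_def using \<delta> by simp
  have c0: "c \<noteq> 0" unfolding c_def by simp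
  have xi: "- b / a = \<xi>" unfolding a_def b_def using \<delta> by simp
  have xi': "- d / c = \<xi>'" unfolding c_def d_def by simp
  have det: "\<bar>a * d - b * c\<bar> = 1"
  proof -
    have "a * d - b * c = (\<xi> - \<xi>') / \<delta>" unfolding a_def b_def c_def d_def using \<delta> by (simp add: field_simps)
    then show ?thesis unfolding \<delta>_def using \<delta> \<delta>_def by (simp add: abs_div)
  qed
  have bnd: "pterm n a b c d 0 1 s t \<le> ereal x" if "(s, t) \<noteq> (0, 0)" for s t
  proof -
    have "pterm n a b c d 0 1 s t = mu_term n \<xi> \<xi>' s t"
      using mu_term_pterm[OF a0 c0, where n=n and b=b and d=d and s=s and t=t] unfolding xi xi' by simp
    also have "\<dots> \<le> mu_n n \<xi> \<xi>'" by (rule mu_term_le_mu[OF that])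
    finally show ?thesis using mu by simp
  qed
  have g1: "real_of_int (gcd (0 * s + 1 * t) (int n)) \<ge> 1" for s t :: int
  proof -
    have "gcd (0 * s + 1 * t) (int n) > 0" using n by simp
    then show ?thesis by linarith
  qed
  have lowb: "\<bar>X * Y\<bar> \<ge> 1 / Cb \<and> X * Y \<noteq> 0 \<and> Cb > 0"
    if "(s, t) \<noteq> (0, 0)" "X = a * of_int s + b * of_int t" "Y = c * of_int s + d * of_int t" for s t X Y
  proof -
    have "pterm n a b c d 0 1 s t \<le> ereal x" by (rule bnd[OF that(1)])
    then have xy0: "X * Y \<noteq> 0" and le: "real_of_int (gcd (0 * s + 1 * t) (int n)) * 1 / \<bar>X * Y\<bar> \<le> x"
      unfolding pterm_def Let_def that(2,3)[symmetric] det by (auto split: if_splits)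
    have "1 / \<bar>X * Y\<bar> \<le> real_of_int (gcd (0 * s + 1 * t) (int n)) / \<bar>X * Y\<bar>"
      using g1 xy0 by (simp add: divide_right_mono)
    then have "1 / \<bar>X * Y\<bar> \<le> Cb" using le xC by simp
    moreover have Cb0: "Cb > 0" using \<open>1 / \<bar>X * Y\<bar> \<le> Cb\<close> xy0
      by (smt (verit, best) zero_less_abs_iff zero_less_divide_1_iff)
    ultimately have "1 \<le> Cb * \<bar>X * Y\<bar>" using xy0 by (simp add: divide_le_eq mult.commute)
    then have "\<bar>X * Y\<bar> \<ge> 1 / Cb" using Cb0 by (simp add: divide_le_eq mult.commute)
    then show ?thesis using xy0 Cb0 by simp
  qed
  have Cb0: "Cb > 0" using lowb[of 1 0 a c] by simp
  define N :: nat where "N = nat \<lceil>\<bar>a * c\<bar>\<rceil> + 1"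
  have N0: "N > 0" unfolding N_def by simp
  have NR: "real N \<ge> \<bar>a * c\<bar>"
  proof -
    have c1: "\<bar>a * c\<bar> \<le> of_int \<lceil>\<bar>a * c\<bar>\<rceil>" by (rule le_of_int_ceiling)
    have c2: "real (nat \<lceil>\<bar>a * c\<bar>\<rceil> + 1) = of_int \<lceil>\<bar>a * c\<bar>\<rceil> + 1" by simp
    show ?thesis using c1 c2 unfolding N_def by linarith
  qed
  have N2: "real N * real N \<ge> \<bar>a * c\<bar>"
  proof -
    have "real N \<ge> 1" using N0 by simp
    then have "real N * real N \<ge> real N * 1" by (intro mult_left_mono) auto
    then show ?thesis using NR by simp
  qed
  obtain hh kk where cop: "coprime hh kk" and kk: "0 < kk" "kk \<le> int N"
    and app: "\<bar>of_int kk * \<xi> - of_int hh\<bar> < 1 / real N"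
    using Dirichlet_approx_coprime[OF N0, of \<xi>] by auto
  define X where "X = a * of_int hh + b * of_int kk"
  define Y where "Y = c * of_int hh + d * of_int kk"
  have XY: "\<bar>X * Y\<bar> \<ge> 1 / Cb" "X * Y \<noteq> 0"
    using lowb[of hh kk X Y] kk X_def Y_def by auto
  have bxi: "b = - \<xi> * a" unfolding a_def b_def by simp
  have Xe: "X = - a * (of_int kk * \<xi> - of_int hh)" unfolding X_def bxi by (simp add: algebra_simps)
  have Xb: "\<bar>X\<bar> \<le> \<bar>a\<bar> / real N"
  proof -
    have "\<bar>X\<bar> = \<bar>a\<bar> * \<bar>of_int kk * \<xi> - of_int hh\<bar>" unfolding Xe by (simp add: abs_mult)
    also have "\<dots> \<le> \<bar>a\<bar> * (1 / real N)" using app by (intro mult_left_mono) auto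
    finally show ?thesis by simp
  qed
  have Ye: "Y = (c / a) * X + ((a * d - b * c) / a) * of_int kk"
    unfolding X_def Y_def using a0 by (simp add: field_simps)
  have Yb: "\<bar>Y\<bar> \<le> \<bar>c\<bar> / real N + real N / \<bar>a\<bar>"
  proof -
    have "\<bar>Y\<bar> \<le> \<bar>c / a\<bar> * \<bar>X\<bar> + \<bar>(a * d - b * c) / a\<bar> * \<bar>of_int kk\<bar>"
      unfolding Ye by (metis abs_mult abs_triangle_ineq)
    also have "\<bar>c / a\<bar> * \<bar>X\<bar> \<le> \<bar>c / a\<bar> * (\<bar>a\<bar> / real N)" using Xb by (intro mult_left_mono) auto
    also have "\<bar>c / a\<bar> * (\<bar>a\<bar> / real N) = \<bar>c\<bar> / real N" using a0 by (simp add: abs_div)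
    also have "\<bar>(a * d - b * c) / a\<bar> * \<bar>of_int kk\<bar> = \<bar>of_int kk\<bar> / \<bar>a\<bar>" using det by (simp add: abs_div)
    also have "\<bar>real_of_int kk\<bar> / \<bar>a\<bar> \<le> real N / \<bar>a\<bar>" using kk by (intro divide_right_mono) auto
    finally show ?thesis by simp
  qed
  have hiXY: "\<bar>X * Y\<bar> \<le> 2"
  proof -
    have "\<bar>X * Y\<bar> = \<bar>X\<bar> * \<bar>Y\<bar>" by (simp add: abs_mult)
    also have "\<dots> \<le> (\<bar>a\<bar> / real N) * (\<bar>c\<bar> / real N + real N / \<bar>a\<bar>)"
      using Xb Yb by (intro mult_mono) auto
    also have "\<dots> = \<bar>a * c\<bar> / (real N * real N) + 1" using a0 N0 by (simp add: field_simps abs_mult)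
    also have "\<dots> \<le> 2" using N2 N0 by (simp add: divide_le_eq)
    finally show ?thesis .
  qed
  define l where "l = sqrt (\<bar>Y\<bar> / \<bar>X\<bar>)"
  have X0: "X \<noteq> 0" and Y0: "Y \<noteq> 0" using XY by auto
  have l0: "l > 0" unfolding l_def using X0 Y0 by simp
  have l2: "l * l = \<bar>Y\<bar> / \<bar>X\<bar>" unfolding l_def by simp
  have x2: "(l * a * of_int hh + l * b * of_int kk)\<^sup>2 = \<bar>X * Y\<bar>"
  proof -
    have "(l * a * of_int hh + l * b * of_int kk)\<^sup>2 = (l * l) * (\<bar>X\<bar> * \<bar>X\<bar>)"
      unfolding X_def by (simp add: power2_eq_square algebra_simps)
    also have "\<dots> = \<bar>X * Y\<bar>" unfolding l2 abs_mult
      using aux1[of "\<bar>X\<bar>" "\<bar>Y\<bar>"] X0 by simp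
    finally show ?thesis .
  qed
  have y2: "(c / l * of_int hh + d / l * of_int kk)\<^sup>2 = \<bar>X * Y\<bar>"
  proof -
    have "(c / l * of_int hh + d / l * of_int kk)\<^sup>2 = (\<bar>Y\<bar> * \<bar>Y\<bar>) / (l * l)"
      unfolding Y_def using l0 by (simp add: power2_eq_square field_simps)
    also have "\<dots> = \<bar>X * Y\<bar>" unfolding l2 abs_mult
      using aux2[of "\<bar>X\<bar>" "\<bar>Y\<bar>"] X0 Y0 by simp
    finally show ?thesis .
  qed
  have lo: "2 / Cb \<le> (l * a * of_int hh + l * b * of_int kk)\<^sup>2 + (c / l * of_int hh + d / l * of_int kk)\<^sup>2"
    unfolding x2 y2 using XY(1) by simp
  have hi: "(l * a * of_int hh + l * b * of_int kk)\<^sup>2 + (c / l * of_int hh + d / l * of_int kk)\<^sup>2 \<le> 4"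
    unfolding x2 y2 using hiXY by simp
  have det': "\<bar>l * a * (d / l) - l * b * (c / l)\<bar> = 1" using det l0 by (simp add: field_simps)
  have r0: "2 / Cb > 0" using Cb0 by simp
  obtain h11 h12 h21 h22 where H: "h11 * h22 - h12 * h21 = 1"
    "\<bar>l * a * of_int h11 + l * b * of_int h21\<bar> \<le> sqrt (4 + 1 / (2 / Cb))"
    "\<bar>l * a * of_int h12 + l * b * of_int h22\<bar> \<le> sqrt (4 + 1 / (2 / Cb))"
    "\<bar>c / l * of_int h11 + d / l * of_int h21\<bar> \<le> sqrt (4 + 1 / (2 / Cb))"
    "\<bar>c / l * of_int h12 + d / l * of_int h22\<bar> \<le> sqrt (4 + 1 / (2 / Cb))"
    by (rule good_basis[OF det' cop r0 lo hi])
  define a2 where "a2 = l * a * of_int h11 + l * b * of_int h21"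
  define b2 where "b2 = l * a * of_int h12 + l * b * of_int h22"
  define c2 where "c2 = c / l * of_int h11 + d / l * of_int h21"
  define d2 where "d2 = c / l * of_int h12 + d / l * of_int h22"
  define p where "p = 0 * h11 + 1 * h21"
  define q where "q = 0 * h12 + 1 * h22"
  have det2: "\<bar>a2 * d2 - b2 * c2\<bar> = 1"
  proof -
    have "a2 * d2 - b2 * c2 = (l * a * (d / l) - l * b * (c / l)) * of_int (h11 * h22 - h12 * h21)"
      unfolding a2_def b2_def c2_def d2_def by (rule det_transform)
    then show ?thesis using det' H(1) by simp
  qed
  have cop2: "coprime p q" unfolding p_def q_def using det1_coprime[OF H(1)] by simp
  have bnd2: "pterm n a2 b2 c2 d2 p q s t \<le> ereal x" if "(s, t) \<noteq> (0, 0)" for s t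
  proof -
    have "pterm n a2 b2 c2 d2 p q s t = pterm n (l * a) (l * b) (c / l) (d / l) 0 1 (h11 * s + h12 * t) (h21 * s + h22 * t)"
      unfolding a2_def b2_def c2_def d2_def p_def q_def by (rule pterm_transform[OF H(1)])
    also have "\<dots> = pterm n a b c d 0 1 (h11 * s + h12 * t) (h21 * s + h22 * t)"
      using l0 by (simp add: pterm_scale)
    also have "\<dots> \<le> ereal x" by (rule bnd[OF transform_nonzero[OF H(1) that]])
    finally show ?thesis .
  qed
  show ?thesis
    by (rule exI[of _ a2], rule exI[of _ b2], rule exI[of _ c2], rule exI[of _ d2], rule exI[of _ p], rule exI[of _ q])
      (use det2 cop2 bnd2 H a2_def b2_def c2_def d2_def in auto)
qed

lemma mu_attain:
  assumes n: "n > 0"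
    and appr: "\<And>k::nat. \<exists>\<xi> \<xi>'. \<xi> \<noteq> \<xi>' \<and> mu_n n \<xi> \<xi>' \<le> ereal (m + 1 / (real k + 1))"
  shows "\<exists>\<xi> \<xi>'. \<xi> \<noteq> \<xi>' \<and> mu_n n \<xi> \<xi>' \<le> ereal m"
proof -
  define Cb where "Cb = \<bar>m\<bar> + 2"
  define Kb where "Kb = sqrt (4 + 1 / (2 / Cb))"
  have ex: "\<exists>a b c d p q. \<bar>a * d - b * c\<bar> = 1 \<and> \<bar>a\<bar> \<le> Kb \<and>
     \<bar>b\<bar> \<le> Kb \<and> \<bar>c\<bar> \<le> Kb \<and> \<bar>d\<bar> \<le> Kb \<and> coprime p q \<and>
     (\<forall>s t. (s, t) \<noteq> (0, 0) \<longrightarrow> pterm n a b c d p q s t \<le> ereal (m + 1 / (real k + 1)))" for k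
  proof -
    obtain \<xi> \<xi>' where "\<xi> \<noteq> \<xi>'" "mu_n n \<xi> \<xi>' \<le> ereal (m + 1 / (real k + 1))" using appr by blast
    moreover have "m + 1 / (real k + 1) \<le> Cb"
    proof -
      have "1 / (real k + 1) \<le> 1" by simp
      then show ?thesis unfolding Cb_def by linarith
    qed
    ultimately show ?thesis unfolding Kb_def by (rule reduce[OF n])
  qed
  obtain A B Cc D P Q where H: "\<And>k. \<bar>A k * D k - B k * Cc k\<bar> = 1 \<and> \<bar>A k\<bar> \<le> Kb \<and>
     \<bar>B k\<bar> \<le> Kb \<and> \<bar>Cc k\<bar> \<le> Kb \<and> \<bar>D k\<bar> \<le> Kb \<and> coprime (P k) (Q k) \<and>
     (\<forall>s t. (s, t) \<noteq> (0, 0) \<longrightarrow> pterm n (A k) (B k) (Cc k) (D k) (P k) (Q k) s t \<le> ereal (m + 1 / (real k + 1)))"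
    using ex by metis
  show ?thesis
  proof (rule KCL[where A=A and B=B and Cc=Cc and D=D and P=P and Q=Q and K=Kb])
    fix k
    show "\<bar>A k * D k - B k * Cc k\<bar> = 1" "\<bar>A k\<bar> \<le> Kb" "\<bar>B k\<bar> \<le> Kb" "\<bar>Cc k\<bar> \<le> Kb" "\<bar>D k\<bar> \<le> Kb"
      "coprime (P k) (Q k)" using H[of k] by auto
  next
    show "n > 0" by (rule n)
  next
    fix s t :: int and e :: real
    assume st: "(s, t) \<noteq> (0, 0)" and e: "e > 0"
    show "eventually (\<lambda>k. pterm n (A k) (B k) (Cc k) (D k) (P k) (Q k) s t \<le> ereal (m + e)) sequentially"
      unfolding eventually_sequentially
    proof (intro exI allI impI)
      fix k assume k: "k \<ge> nat \<lceil>1 / e\<rceil>"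
      have "1 / e \<le> real (nat \<lceil>1 / e\<rceil>)" by (rule real_nat_ceiling_ge)
      also have "\<dots> \<le> real k" using k by simp
      finally have "1 / e < real k + 1" by simp
      then have "1 / (real k + 1) < e" using e by (simp add: divide_less_eq mult.commute)
      moreover have "pterm n (A k) (B k) (Cc k) (D k) (P k) (Q k) s t \<le> ereal (m + 1 / (real k + 1))"
        using H[of k] st by blast
      ultimately show "pterm n (A k) (B k) (Cc k) (D k) (P k) (Q k) s t \<le> ereal (m + e)"
        by (meson add_left_mono ereal_less_eq(3) less_le order_trans)
    qed
  qed
qed

lemma golden_nz:
  fixes s t :: int
  shows "s * s - s * t - t * t = 0 \<Longrightarrow> s = 0 \<and> t = 0"
proof (induction "nat (\<bar>s\<bar> + \<bar>t\<bar>)" arbitrary: s t rule: less_induct)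
  case less
  have ev: "even s \<and> even t"
  proof (rule ccontr)
    assume "\<not> (even s \<and> even t)"
    then have "odd (s * s - s * t - t * t)" by auto
    then show False using less.prems by simp
  qed
  then obtain s' t' where st: "s = 2 * s'" "t = 2 * t'" by (auto elim!: evenE)
  show ?case
  proof (cases "s = 0 \<and> t = 0")
    case True then show ?thesis .
  next
    case False
    have eq: "s' * s' - s' * t' - t' * t' = 0" using less.prems unfolding st by (simp add: algebra_simps)
    have "nat (\<bar>s'\<bar> + \<bar>t'\<bar>) < nat (\<bar>s\<bar> + \<bar>t\<bar>)" using False unfolding st by auto
    then have "s' = 0 \<and> t' = 0" using less.hyps eq by blast
    then show ?thesis using st by simp
  qed
qed

lemma mu_term_nonneg: "mu_term n \<xi> \<xi>' s t \<ge> 0"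
  unfolding mu_term_def Let_def by auto

lemma mu_n_nonneg: "mu_n n \<xi> \<xi>' \<ge> 0"
  using mu_term_le_mu[of 1 0 n \<xi> \<xi>'] mu_term_nonneg[of n \<xi> \<xi>' 1 0] by simp

lemma mu_real:
  assumes "\<xi> \<noteq> \<xi>'" "mu_n n \<xi> \<xi>' \<le> ereal C"
  shows "\<exists>y. y \<in> M_set n \<and> y \<le> C \<and> mu_n n \<xi> \<xi>' = ereal y"
proof -
  have "mu_n n \<xi> \<xi>' \<noteq> \<infinity>" "mu_n n \<xi> \<xi>' \<noteq> - \<infinity>" using assms(2) mu_n_nonneg[of n \<xi> \<xi>'] by auto
  then obtain y where y: "mu_n n \<xi> \<xi>' = ereal y" by (cases "mu_n n \<xi> \<xi>'") auto
  then show ?thesis using assms unfolding M_set_def by auto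
qed

lemma golden:
  assumes n: "n > 0"
  shows "\<exists>\<xi> \<xi>'. \<xi> \<noteq> \<xi>' \<and> mu_n n \<xi> \<xi>' \<le> ereal (real n * sqrt 5)"
proof -
  define \<phi> :: real where "\<phi> = (1 + sqrt 5) / 2"
  define \<psi> :: real where "\<psi> = (1 - sqrt 5) / 2"
  have s5: "sqrt 5 * sqrt 5 = (5::real)" by simp
  have ne: "\<phi> \<noteq> \<psi>" unfolding \<phi>_def \<psi>_def by simp
  have D0: "\<phi> - \<psi> = sqrt 5" unfolding \<phi>_def \<psi>_def by (simp add: field_simps)
  have D: "\<bar>\<phi> - \<psi>\<bar> = sqrt 5" unfolding D0 by simp
  have "mu_n n \<phi> \<psi> \<le> ereal (real n * sqrt 5)"
  proof (rule mu_le)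
    fix s t :: int assume st: "(s, t) \<noteq> (0, 0)"
    have prod: "(of_int s - of_int t * \<phi>) * (of_int s - of_int t * \<psi>) = of_int (s * s - s * t - t * t)"
      unfolding \<phi>_def \<psi>_def by (simp add: algebra_simps s5 power2_eq_square)
        (simp add: field_simps s5)
    have nz: "s * s - s * t - t * t \<noteq> 0" using golden_nz st by blast
    then have ge1: "\<bar>real_of_int (s * s - s * t - t * t)\<bar> \<ge> 1" by linarith
    have dd: "\<bar>of_int s - of_int t * \<phi>\<bar> * \<bar>of_int s - of_int t * \<psi>\<bar> = \<bar>real_of_int (s * s - s * t - t * t)\<bar>"
      unfolding prod[symmetric] by (simp add: abs_mult)
    have g: "real_of_int (gcd t (int n)) \<le> real n"
    proof -
      have "gcd t (int n) \<le> int n" using n by (intro gcd_le2_int) simp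
      then show ?thesis by linarith
    qed
    have gp: "real_of_int (gcd t (int n)) \<ge> 0" by simp
    have "real_of_int (gcd t (int n)) * sqrt 5 / \<bar>real_of_int (s * s - s * t - t * t)\<bar> \<le> real_of_int (gcd t (int n)) * sqrt 5 / 1"
      using ge1 gp by (intro divide_left_mono) auto
    also have "\<dots> \<le> real n * sqrt 5" using g by (simp add: mult_right_mono)
    finally have fin: "real_of_int (gcd t (int n)) * sqrt 5 / \<bar>real_of_int (s * s - s * t - t * t)\<bar> \<le> real n * sqrt 5" .
    define z where "z = real_of_int (s * s - s * t - t * t)"
    have z0: "z \<noteq> 0" unfolding z_def using nz by (simp only: of_int_eq_0_iff not_False_eq_True)
    show "mu_term n \<phi> \<psi> s t \<le> ereal (real n * sqrt 5)"
      unfolding mu_term_def Let_def dd D z_def[symmetric] using z0 fin[folded z_def] by simp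
  qed
  then show ?thesis using ne by blast
qed

lemma mu_finite_irrat:
  assumes "mu_n n \<xi> \<xi>' \<le> ereal C"
  shows "\<xi> \<notin> \<rat>"
proof
  assume "\<xi> \<in> \<rat>"
  then obtain a b :: int where b: "b > 0" and x: "\<xi> = of_int a / of_int b" by (auto elim: Rats_cases')
  have "of_int a - of_int b * \<xi> = 0" unfolding x using b by simp
  then have "mu_term n \<xi> \<xi>' a b = \<infinity>" unfolding mu_term_def Let_def by simp
  moreover have "mu_term n \<xi> \<xi>' a b \<le> mu_n n \<xi> \<xi>'" by (rule mu_term_le_mu) (use b in simp)
  ultimately show False using assms by simp
qed

lemma lam_term_nonneg: "lam_term n \<xi> s t \<ge> 0"
  unfolding lam_term_def by auto

lemma lambda_nonneg: "lambda_n n \<xi> \<ge> 0"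
  unfolding lambda_n_def
proof (rule INF_greatest)
  fix \<epsilon> :: real assume "\<epsilon> \<in> {0<..}"
  then have e: "\<epsilon> > 0" by simp
  define N :: nat where "N = nat \<lceil>1 / \<epsilon>\<rceil> + 1"
  have N1: "real N > 1 / \<epsilon>"
  proof -
    have "1 / \<epsilon> \<le> real (nat \<lceil>1 / \<epsilon>\<rceil>)" by (rule real_nat_ceiling_ge)
    then show ?thesis unfolding N_def by simp
  qed
  have N0: "real N > 0" unfolding N_def by simp
  define s where "s = \<lfloor>\<xi> * real N\<rfloor>"
  have "\<bar>of_int s / of_int (int N) - \<xi>\<bar> < \<epsilon>"
  proof -
    have "of_int s / of_int (int N) - \<xi> = (of_int s - \<xi> * real N) / real N" using N0 by (simp add: field_simps)
    moreover have "\<bar>of_int s - \<xi> * real N\<bar> < 1" unfolding s_def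
      by (metis abs_of_nonpos add.commute diff_gt_0_iff_gt floor_correct
          real_of_int_floor_add_one_gt
          diff_less_eq minus_diff_eq linorder_not_le)
    ultimately have "\<bar>of_int s / of_int (int N) - \<xi>\<bar> < 1 / real N" using N0 by (simp add: abs_div divide_strict_right_mono)
    also have "1 / real N < \<epsilon>" using N1 e N0 by (simp add: divide_less_eq mult.commute)
    finally show ?thesis .
  qed
  then have mem: "(s, int N) \<in> {(s, t). t > 0 \<and> \<bar>of_int s / of_int t - \<xi>\<bar> < \<epsilon>}" using N0 by simp
  show "0 \<le> (SUP p\<in>{(s, t). t > 0 \<and> \<bar>of_int s / of_int t - \<xi>\<bar> < \<epsilon>}. lam_term n \<xi> (fst p) (snd p))"
    by (rule SUP_upper2[OF mem]) (simp add: lam_term_nonneg)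
qed

lemma lambda_le_mu:
  assumes ne: "\<xi> \<noteq> \<xi>'" and mu: "mu_n n \<xi> \<xi>' \<le> ereal m"
  shows "lambda_n n \<xi> \<le> ereal m"
proof (rule ereal_le_epsilon2)
  fix e :: real assume e: "e > 0"
  define D where "D = \<bar>\<xi> - \<xi>'\<bar>"
  have D0: "D > 0" unfolding D_def using ne by simp
  have "0 \<le> ereal m" by (rule order_trans[OF mu_n_nonneg mu])
  then have m0: "m \<ge> 0" by simp
  define \<epsilon> where "\<epsilon> = e * D / (m + 1)"
  have \<epsilon>0: "\<epsilon> > 0" unfolding \<epsilon>_def using e D0 m0 by simp
  have "lambda_n n \<xi> \<le> (SUP p\<in>{(s, t). t > 0 \<and> \<bar>of_int s / of_int t - \<xi>\<bar> < \<epsilon>}. lam_term n \<xi> (fst p) (snd p))"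
    unfolding lambda_n_def by (rule INF_lower) (use \<epsilon>0 in simp)
  also have "\<dots> \<le> ereal (m + e)"
  proof (rule SUP_least)
    fix p :: "int \<times> int" assume "p \<in> {(s, t). t > 0 \<and> \<bar>of_int s / of_int t - \<xi>\<bar> < \<epsilon>}"
    then obtain s t where p: "p = (s, t)" and t: "t > 0" and cl: "\<bar>of_int s / of_int t - \<xi>\<bar> < \<epsilon>" by auto
    define T where "T = real_of_int t"
    have T0: "T > 0" unfolding T_def using t by simp
    define G where "G = real_of_int (gcd t (int n))"
    have G0: "G \<ge> 0" unfolding G_def by simp
    define A where "A = \<bar>of_int s - of_int t * \<xi>\<bar>"
    define B where "B = \<bar>of_int s - of_int t * \<xi>'\<bar>"
    have "mu_term n \<xi> \<xi>' s t \<le> ereal m" using mu_term_le_mu[of s t n \<xi> \<xi>'] t mu by simp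
    then have AB0: "A * B \<noteq> 0" and mle: "G * D / (A * B) \<le> m"
      unfolding mu_term_def Let_def A_def[symmetric] B_def[symmetric] G_def[symmetric] D_def[symmetric]
      by (auto split: if_splits)
    have A0: "A > 0" and B0: "B > 0" using AB0 unfolding A_def B_def by auto
    have ne1: "\<not> (of_int s / of_int t = \<xi>)"
    proof
      assume "of_int s / of_int t = \<xi>"
      then have "A = 0" unfolding A_def using T0 T_def by (simp add: field_simps)
      then show False using A0 by simp
    qed
    have den: "(of_int t)\<^sup>2 * \<bar>of_int s / of_int t - \<xi>\<bar> = T * A"
    proof -
      have "of_int s / of_int t - \<xi> = (of_int s - of_int t * \<xi>) / T" unfolding T_def using T0 T_def by (simp add: field_simps)
      then show ?thesis unfolding A_def T_def using T0 T_def by (simp add: abs_div power2_eq_square)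
    qed
    have lt: "lam_term n \<xi> s t = ereal (G / (T * A))"
      unfolding lam_term_def den G_def[symmetric] using ne1 by simp
    have Bb: "B \<le> T * (\<epsilon> + D)"
    proof -
      have "of_int s - of_int t * \<xi>' = T * ((of_int s / of_int t - \<xi>) + (\<xi> - \<xi>'))"
        unfolding T_def using T0 T_def by (simp add: field_simps)
      then have "B = T * \<bar>(of_int s / of_int t - \<xi>) + (\<xi> - \<xi>')\<bar>" unfolding B_def using T0 by (simp add: abs_mult)
      also have "\<dots> \<le> T * (\<epsilon> + D)"
      proof (intro mult_left_mono)
        have "\<bar>(of_int s / of_int t - \<xi>) + (\<xi> - \<xi>')\<bar> \<le> \<bar>of_int s / of_int t - \<xi>\<bar> + \<bar>\<xi> - \<xi>'\<bar>"
          by (rule abs_triangle_ineq)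
        then show "\<bar>(of_int s / of_int t - \<xi>) + (\<xi> - \<xi>')\<bar> \<le> \<epsilon> + D" using cl unfolding D_def by linarith
        show "0 \<le> T" using T0 by simp
      qed
      finally show ?thesis .
    qed
    have "G / (T * A) = (G * D / (A * B)) * (B / (T * D))" using A0 B0 T0 D0 by (simp add: field_simps)
    also have "\<dots> \<le> m * (B / (T * D))" using mle B0 T0 D0 by (intro mult_right_mono) auto
    also have "\<dots> \<le> m * ((\<epsilon> + D) / D)"
    proof (intro mult_left_mono m0)
      show "B / (T * D) \<le> (\<epsilon> + D) / D" using Bb T0 D0 by (simp add: field_simps)
    qed
    also have "\<dots> = m + m * e / (m + 1)"
    proof -
      have m1: "m + 1 \<noteq> 0" using m0 by simp
      have q1: "\<epsilon> / D = e / (m + 1)" unfolding \<epsilon>_def using D0 by simp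
      have "(\<epsilon> + D) / D = \<epsilon> / D + 1" using D0 by (simp add: add_divide_distrib)
      then have "(\<epsilon> + D) / D = 1 + e / (m + 1)" using q1 by simp
      then show ?thesis by (simp add: algebra_simps)
    qed
    also have "\<dots> \<le> m + e"
    proof -
      have "m / (m + 1) \<le> 1" using m0 by simp
      then have "(m / (m + 1)) * e \<le> 1 * e" using e by (intro mult_right_mono) auto
      then have "m * e / (m + 1) \<le> e" by simp
      then show ?thesis by simp
    qed
    finally have fin: "G / (T * A) \<le> m + e" .
    show "lam_term n \<xi> (fst p) (snd p) \<le> ereal (m + e)" unfolding p using lt fin by simp
  qed
  finally show "lambda_n n \<xi> \<le> ereal m + ereal e" by simp
qed

theorem proposition3p7:
  fixes n :: nat
  assumes "n > 0"
  shows "\<exists>m. m \<in> L_set n \<and> (\<forall>x\<in>L_set n. m \<le> x) \<and>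
             m \<in> M_set n \<and> (\<forall>x\<in>M_set n. m \<le> x)"
proof -
  have n: "n > 0" by (rule assms)
  have Mne: "M_set n \<noteq> {}"
  proof -
    obtain \<xi> \<xi>' where g: "\<xi> \<noteq> \<xi>'" "mu_n n \<xi> \<xi>' \<le> ereal (real n * sqrt 5)" using golden[OF n] by blast
    obtain y where "y \<in> M_set n" using mu_real[OF g] by blast
    then show ?thesis by blast
  qed
  have Mnn: "x \<ge> 0" if xM: "x \<in> M_set n" for x
  proof -
    obtain \<xi> \<xi>' where "mu_n n \<xi> \<xi>' = ereal x" using xM unfolding M_set_def by blast
    then show ?thesis using mu_n_nonneg[of n \<xi> \<xi>'] by simp
  qed
  have bdd: "bdd_below (M_set n)" by (rule bdd_belowI[where m=0]) (rule Mnn)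
  define m where "m = Inf (M_set n)"
  have mlow: "m \<le> x" if xM: "x \<in> M_set n" for x unfolding m_def by (rule cInf_lower[OF xM bdd])
  have appr: "\<exists>\<xi> \<xi>'. \<xi> \<noteq> \<xi>' \<and> mu_n n \<xi> \<xi>' \<le> ereal (m + 1 / (real k + 1))" for k :: nat
  proof -
    have "Inf (M_set n) < m + 1 / (real k + 1)" unfolding m_def by simp
    then obtain x where x: "x \<in> M_set n" "x < m + 1 / (real k + 1)" using cInf_lessD[OF Mne] by blast
    then obtain \<xi> \<xi>' where "\<xi> \<noteq> \<xi>'" "mu_n n \<xi> \<xi>' = ereal x" unfolding M_set_def by auto
    then show ?thesis using x by (intro exI[of _ \<xi>] exI[of _ \<xi>']) auto
  qed
  obtain \<xi>0 \<xi>0' where ne0: "\<xi>0 \<noteq> \<xi>0'" and mu0: "mu_n n \<xi>0 \<xi>0' \<le> ereal m"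
    using mu_attain[OF n appr] by blast
  obtain y0 where y0: "y0 \<in> M_set n" "y0 \<le> m" using mu_real[OF ne0 mu0] by blast
  have mM: "m \<in> M_set n" using y0 mlow[OF y0(1)] by simp
  have lamM: "\<exists>y\<in>M_set n. y \<le> x" if xL: "x \<in> L_set n" for x
  proof -
    obtain \<xi> where "\<xi> \<notin> \<rat>" "lambda_n n \<xi> = ereal x" using xL unfolding L_set_def by auto
    then obtain \<eta> \<eta>' where g: "\<eta> \<noteq> \<eta>'" "mu_n n \<eta> \<eta>' \<le> ereal x" using lambda_to_mu[OF n] by blast
    obtain y where "y \<in> M_set n" "y \<le> x" using mu_real[OF g] by blast
    then show ?thesis by blast
  qed
  have Lm: "m \<le> x" if xL: "x \<in> L_set n" for x
  proof -
    obtain y where "y \<in> M_set n" "y \<le> x" using lamM[OF xL] by blast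
    then show ?thesis using mlow[of y] by simp
  qed
  have lam0: "lambda_n n \<xi>0 \<le> ereal m" by (rule lambda_le_mu[OF ne0 mu0])
  have "lambda_n n \<xi>0 \<noteq> \<infinity>" "lambda_n n \<xi>0 \<noteq> - \<infinity>" using lam0 lambda_nonneg[of n \<xi>0] by auto
  then obtain l where l: "lambda_n n \<xi>0 = ereal l" by (cases "lambda_n n \<xi>0") auto
  have irr: "\<xi>0 \<notin> \<rat>" by (rule mu_finite_irrat[OF mu0])
  have lL: "l \<in> L_set n" unfolding L_set_def using irr l by blast
  have "l \<le> m" using lam0 l by simp
  moreover have "m \<le> l" by (rule Lm[OF lL])
  ultimately have "l = m" by simp
  then have mL: "m \<in> L_set n" using lL by simp
  show ?thesis
    by (rule exI[of _ m]) (intro conjI mL mM ballI Lm mlow; assumption)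
qed

end
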